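(* Let $q\in[1,\infty]$, $(d_M)_{M\in\mathbb N}\in\mathbb N^{\mathbb N}$, $(r_M)_{M\in\mathbb N}$ reals with $r_M\ge1$, and let $\Sigma_M=B_{d_M,\|\cdot\|_q}(0,r_M)$ be the set of sequences in $\ell^q(\mathbb N)$ of $\ell^q$-norm at most $r_M$ with all coordinates beyond the first $d_M$ equal to zero. Then $\Sigma=(\Sigma_M)_M$ is either $\infty$-encodable in $\ell^q(\mathbb N)$ or $\gamma$-encodable in $\ell^q(\mathbb N)$ for no $\gamma>0$. Moreover, $\Sigma$ is $\infty$-encodable if and only if $d_M(\log_2(r_M)+1)=O(M^{1+h})$ as $M\to\infty$ for every $h>0$.
   Context: A finite $X\subset A$ is an $\varepsilon$-covering of $A$ (in a metric space) if every point of $A$ is within distance $\varepsilon$ of some point of $X$. For $\gamma,h>0$, a $(\gamma,h)$-encoding of $\Sigma=(\Sigma_M)_M$ is a sequence $(\Sigma(\gamma,h)_M)_M$ such that for some $c_1,c_2>0$ and all $M$, $\Sigma(\gamma,h)_M$ is a $c_1M^{-\gamma}$-covering of $\Sigma_M$ with $\log_2|\Sigma(\gamma,h)_M|\le c_2M^{1+h}$. $\Sigma$ is $\gamma$-encodable if it admits a $(\gamma,h)$-encoding for every $h>0$, and $\infty$-encodable if it is $\gamma$-encodable for every $\gamma>0$. *)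

theory Defs
  imports "HOL-Analysis.Analysis" "HOL-Library.Landau_Symbols"
begin

definition lq_space :: "ereal \<Rightarrow> (nat \<Rightarrow> real) set" where
  "lq_space q = (if q = \<infinity> then {x. bounded (range (\<lambda>n. x n))}
                 else {x. summable (\<lambda>n. \<bar>x n\<bar> powr real_of_ereal q)})"

definition lq_norm :: "ereal \<Rightarrow> (nat \<Rightarrow> real) \<Rightarrow> real" where
  "lq_norm q x = (if q = \<infinity> then (SUP n. \<bar>x n\<bar>)
                  else (\<Sum>n. \<bar>x n\<bar> powr real_of_ereal q) powr (1 / real_of_ereal q))"

definition lq_ball_fin :: "ereal \<Rightarrow> nat \<Rightarrow> real \<Rightarrow> (nat \<Rightarrow> real) set" where
  "lq_ball_fin q d r = {x \<in> lq_space q. lq_norm q x \<le> r \<and> (\<forall>n\<ge>d. x n = 0)}"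

definition lq_covering :: "ereal \<Rightarrow> (nat \<Rightarrow> real) set \<Rightarrow> (nat \<Rightarrow> real) set \<Rightarrow> real \<Rightarrow> bool" where
  "lq_covering q A X \<epsilon> \<longleftrightarrow> finite X \<and> X \<subseteq> A \<and> (\<forall>a\<in>A. \<exists>x\<in>X. lq_norm q (a - x) \<le> \<epsilon>)"

definition has_encoding :: "ereal \<Rightarrow> (nat \<Rightarrow> (nat \<Rightarrow> real) set) \<Rightarrow> real \<Rightarrow> real \<Rightarrow> bool" where
  "has_encoding q S \<gamma> h \<longleftrightarrow> (\<exists>c1>0. \<exists>c2>0. \<forall>M\<ge>1. \<exists>X.
      lq_covering q (S M) X (c1 * real M powr (-\<gamma>)) \<and> log 2 (real (card X)) \<le> c2 * real M powr (1 + h))"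

definition gamma_encodable :: "ereal \<Rightarrow> (nat \<Rightarrow> (nat \<Rightarrow> real) set) \<Rightarrow> real \<Rightarrow> bool" where
  "gamma_encodable q S \<gamma> \<longleftrightarrow> (\<forall>h>0. has_encoding q S \<gamma> h)"

definition inf_encodable :: "ereal \<Rightarrow> (nat \<Rightarrow> (nat \<Rightarrow> real) set) \<Rightarrow> bool" where
  "inf_encodable q S \<longleftrightarrow> (\<forall>\<gamma>>0. gamma_encodable q S \<gamma>)"

end

theory Submission
  imports Defs
begin


definition supp_in :: "nat \<Rightarrow> (nat \<Rightarrow> real) \<Rightarrow> bool" where
  "supp_in d x \<longleftrightarrow> (\<forall>n\<ge>d. x n = 0)"

lemma supp_in_diff: "supp_in d x \<Longrightarrow> supp_in d y \<Longrightarrow> supp_in d (x - y)"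
  by (simp add: supp_in_def)

lemma supp_space: "supp_in d x \<Longrightarrow> x \<in> lq_space q"
proof -
  assume s: "supp_in d x"
  have fin: "\<And>n. n \<notin> {..<d} \<Longrightarrow> x n = 0" using s by (auto simp: supp_in_def)
  have "range x \<subseteq> x ` {..<d} \<union> {0}" using fin by auto
  then have "bounded (range x)" by (meson bounded_subset finite_Un finite_imageI finite_imp_bounded finite_insert finite_lessThan insert_is_Un sup_commute finite.emptyI)
  moreover have "summable (\<lambda>n. \<bar>x n\<bar> powr real_of_ereal q)"
    by (rule summable_finite[of "{..<d}"]) (auto simp: fin)
  ultimately show ?thesis by (auto simp: lq_space_def)
qed

lemma norm_fin:
  assumes "q = ereal p" "supp_in d x"
  shows "lq_norm q x = (\<Sum>n<d. \<bar>x n\<bar> powr p) powr (1/p)"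
proof -
  have fin: "\<And>n. n \<notin> {..<d} \<Longrightarrow> x n = 0" using assms by (auto simp: supp_in_def)
  have "(\<Sum>n. \<bar>x n\<bar> powr p) = (\<Sum>n<d. \<bar>x n\<bar> powr p)"
    by (rule suminf_finite) (auto simp: fin)
  then show ?thesis using assms(1) by (simp add: lq_norm_def)
qed

lemma bdd_inf:
  assumes "supp_in d x" shows "bdd_above (range (\<lambda>n. \<bar>x n\<bar>))"
proof -
  have fin: "\<And>n. n \<notin> {..<d} \<Longrightarrow> x n = 0" using assms by (auto simp: supp_in_def)
  have "range (\<lambda>n. \<bar>x n\<bar>) \<subseteq> (\<lambda>n. \<bar>x n\<bar>) ` {..<d} \<union> {0}"
  proof (clarsimp)
    fix n assume "\<bar>x n\<bar> \<notin> (\<lambda>n. \<bar>x n\<bar>) ` {..<d}"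
    then show "x n = 0" using fin by (cases "n < d") auto
  qed
  moreover have "finite ((\<lambda>n. \<bar>x n\<bar>) ` {..<d} \<union> {0})" by simp
  ultimately show ?thesis by (meson bdd_above_finite bdd_above_mono)
qed

lemma norm_inf_le:
  assumes "supp_in d x" shows "lq_norm \<infinity> x \<le> c \<longleftrightarrow> (\<forall>n. \<bar>x n\<bar> \<le> c)"
  unfolding lq_norm_def using bdd_inf[OF assms] by (simp add: cSUP_le_iff)

lemma norm_inf_ge:
  assumes "supp_in d x" shows "\<bar>x n\<bar> \<le> lq_norm \<infinity> x"
  unfolding lq_norm_def using cSUP_upper[OF UNIV_I bdd_inf[OF assms]] by simp

lemma q_cases:
  assumes "1 \<le> q"
  obtains "q = \<infinity>" | p where "q = ereal p" "1 \<le> p"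
  using assms by (cases q) auto

lemma coord_le_norm:
  assumes "1 \<le> q" "supp_in d x" shows "\<bar>x i\<bar> \<le> lq_norm q x"
proof (cases rule: q_cases[OF assms(1)])
  case 1 then show ?thesis using norm_inf_ge[OF assms(2)] by simp
next
  case (2 p)
  show ?thesis
  proof (cases "i < d")
    case True
    have "\<bar>x i\<bar> powr p \<le> (\<Sum>n<d. \<bar>x n\<bar> powr p)"
      using True by (intro member_le_sum) auto
    then have "(\<bar>x i\<bar> powr p) powr (1/p) \<le> (\<Sum>n<d. \<bar>x n\<bar> powr p) powr (1/p)"
      using 2 by (intro powr_mono2) auto
    moreover have "(\<bar>x i\<bar> powr p) powr (1/p) = \<bar>x i\<bar>" using 2 by (simp add: powr_powr)
    ultimately show ?thesis using norm_fin[OF 2(1) assms(2)] by simp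
  next
    case False
    then have "x i = 0" using assms(2) by (simp add: supp_in_def)
    then show ?thesis using norm_fin[OF 2(1) assms(2)] by simp
  qed
qed

lemma norm_mono:
  assumes "1 \<le> q" "supp_in d x" "supp_in d y" "\<And>i. \<bar>y i\<bar> \<le> \<bar>x i\<bar>"
  shows "lq_norm q y \<le> lq_norm q x"
proof (cases rule: q_cases[OF assms(1)])
  case 1
  then show ?thesis using norm_inf_le[OF assms(3)] norm_inf_ge[OF assms(2)] assms(4)
    by (meson order_trans)
next
  case (2 p)
  have "(\<Sum>n<d. \<bar>y n\<bar> powr p) \<le> (\<Sum>n<d. \<bar>x n\<bar> powr p)"
    using 2 assms(4) by (intro sum_mono powr_mono2) auto
  then have "(\<Sum>n<d. \<bar>y n\<bar> powr p) powr (1/p) \<le> (\<Sum>n<d. \<bar>x n\<bar> powr p) powr (1/p)"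
    using 2 by (intro powr_mono2) (auto intro: sum_nonneg)
  then show ?thesis using norm_fin[OF 2(1) assms(2)] norm_fin[OF 2(1) assms(3)] by simp
qed

definition wq :: "ereal \<Rightarrow> nat \<Rightarrow> real" where
  "wq q d = (if q = \<infinity> then 1 else real d powr (-1 / real_of_ereal q))"

lemma wq_pos: "d \<ge> 1 \<Longrightarrow> wq q d > 0" by (simp add: wq_def)

lemma wq_ge: assumes "1 \<le> q" "d \<ge> 1" shows "wq q d \<ge> 1 / real d"
proof (cases rule: q_cases[OF assms(1)])
  case 1 then show ?thesis using assms by (simp add: wq_def)
next
  case (2 p)
  have "real d powr (-1) \<le> real d powr (-1/p)"
    using 2 assms by (intro powr_mono) (auto simp: field_simps)
  then show ?thesis using 2 assms by (simp add: wq_def powr_minus divide_inverse)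
qed

lemma N1:
  assumes "1 \<le> q" "d \<ge> 1" "supp_in d x" "c \<ge> 0" "\<And>i. i < d \<Longrightarrow> \<bar>x i\<bar> \<le> c * wq q d"
  shows "lq_norm q x \<le> c"
proof (cases rule: q_cases[OF assms(1)])
  case 1
  have "\<bar>x n\<bar> \<le> c" for n
    using assms 1 by (cases "n < d") (auto simp: wq_def supp_in_def)
  then show ?thesis using norm_inf_le[OF assms(3)] 1 by simp
next
  case (2 p)
  have w: "wq q d = real d powr (-1/p)" using 2 by (simp add: wq_def)
  have "(\<Sum>n<d. \<bar>x n\<bar> powr p) \<le> (\<Sum>n<d. (c * wq q d) powr p)"
    using 2 assms(5) by (intro sum_mono powr_mono2) auto
  also have "\<dots> = real d * (c powr p * real d powr (-1))"
    using 2 assms w by (simp add: powr_mult powr_powr)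
  also have "\<dots> = c powr p" using assms by (simp add: powr_minus)
  finally have "(\<Sum>n<d. \<bar>x n\<bar> powr p) powr (1/p) \<le> (c powr p) powr (1/p)"
    using 2 by (intro powr_mono2) (auto intro: sum_nonneg)
  also have "\<dots> = c" using 2 assms by (simp add: powr_powr)
  finally show ?thesis using norm_fin[OF 2(1) assms(3)] by simp
qed

lemma N2:
  assumes "1 \<le> q" "d \<ge> 1" "supp_in d x" "c \<ge> 0" "D \<subseteq> {..<d}" "real d \<le> 2 * real (card D)"
    "\<And>i. i \<in> D \<Longrightarrow> \<bar>x i\<bar> \<ge> c * wq q d"
  shows "lq_norm q x \<ge> c / 2"
proof (cases rule: q_cases[OF assms(1)])
  case 1
  have "D \<noteq> {}" using assms by auto
  then obtain i where "i \<in> D" by auto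
  then show ?thesis using assms(7)[of i] norm_inf_ge[OF assms(3), of i] 1 assms(4)
    by (simp add: wq_def)
next
  case (2 p)
  have w: "wq q d = real d powr (-1/p)" using 2 by (simp add: wq_def)
  have fD: "finite D" using assms(5) finite_subset by blast
  have "(\<Sum>n\<in>D. (c * wq q d) powr p) \<le> (\<Sum>n\<in>D. \<bar>x n\<bar> powr p)"
  proof (intro sum_mono powr_mono2)
    fix n assume "n \<in> D"
    show "0 \<le> c * wq q d" using assms(4) wq_pos[OF assms(2), of q] by simp
    show "c * wq q d \<le> \<bar>x n\<bar>" using assms(7) \<open>n \<in> D\<close> by simp
  qed (use 2 in auto)
  also have "\<dots> \<le> (\<Sum>n<d. \<bar>x n\<bar> powr p)"
    using assms(5) by (intro sum_mono2) auto
  finally have A: "real (card D) * (c powr p * real d powr (-1)) \<le> (\<Sum>n<d. \<bar>x n\<bar> powr p)"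
    using 2 assms w by (simp add: powr_mult powr_powr)
  have dpos: "real d > 0" using assms(2) by simp
  have h1: "real d powr (-1) = 1 / real d" using dpos by (simp add: powr_minus_divide)
  have h2: "1/2 \<le> real (card D) / real d" using assms(6) dpos by (simp add: le_divide_eq)
  have h3: "c powr p / 2 \<le> c powr p * (real (card D) / real d)"
    using mult_left_mono[OF h2, of "c powr p"] by simp
  have h4: "real (card D) * (c powr p * real d powr (-1)) = c powr p * (real (card D) / real d)"
    by (simp add: h1)
  have "c powr p / 2 \<le> real (card D) * (c powr p * real d powr (-1))"
    using h3 h4 by linarith
  with A have C: "c powr p / 2 \<le> (\<Sum>n<d. \<bar>x n\<bar> powr p)" by linarith
  have B: "(c powr p / 2) powr (1/p) \<le> (\<Sum>n<d. \<bar>x n\<bar> powr p) powr (1/p)"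
    using 2 C by (intro powr_mono2) auto
  have e1: "(c powr p / 2) powr (1/p) = (c powr p) powr (1/p) / 2 powr (1/p)"
    by (rule powr_divide)
  have e2: "(c powr p) powr (1/p) = c" using 2 assms(4) by (simp add: powr_powr)
  have e3: "2 powr (1/p) \<le> 2 powr 1" using 2 by (intro powr_mono) auto
  have e4: "0 < 2 powr (1/p)" by simp
  have "c / 2 \<le> c / 2 powr (1/p)" using e3 e4 assms(4) by (intro divide_left_mono) auto
  then have "(c powr p / 2) powr (1/p) \<ge> c / 2" using e1 e2 by simp
  then show ?thesis using B norm_fin[OF 2(1) assms(3)] by simp
qed



lemma LB_count:
  fixes X :: "(nat\<Rightarrow>real) set"
  assumes q1: "1 \<le> q" and d1: "d \<ge> 1" and k1: "k \<ge> 1" and r0: "r > 0" and eps0: "eps > 0"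
    and ke: "4 * real k * eps < r"
    and cov: "lq_covering q (lq_ball_fin q d r) X eps"
  shows "real k ^ d \<le> real (card X) * 2^d * real k powr (real d / 2)"
proof -
  define w where "w = wq q d"
  have w0: "w > 0" using wq_pos[OF d1] w_def by simp
  define \<sigma> where "\<sigma> = r / real k * w"
  have s0: "\<sigma> > 0" using w0 r0 k1 by (simp add: \<sigma>_def)
  define g where "g s = (\<lambda>i. if i < d then real (s i) * \<sigma> else 0)" for s :: "nat \<Rightarrow> nat"
  define G where "G = PiE {..<d} (\<lambda>_. {..<k})"
  have finG: "finite G" unfolding G_def by (simp add: finite_PiE)
  have cardG: "card G = k ^ d" unfolding G_def by (simp add: card_PiE)
  have supp_g: "supp_in d (g s)" for s by (simp add: supp_in_def g_def)
  have finX: "finite X" and XA: "X \<subseteq> lq_ball_fin q d r"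
    and covers: "\<And>a. a \<in> lq_ball_fin q d r \<Longrightarrow> \<exists>x\<in>X. lq_norm q (a - x) \<le> eps"
    using cov by (auto simp: lq_covering_def)
  have supp_X: "x \<in> X \<Longrightarrow> supp_in d x" for x using XA by (auto simp: lq_ball_fin_def supp_in_def)
  have g_ball: "g s \<in> lq_ball_fin q d r" if "s \<in> G" for s
  proof -
    have "lq_norm q (g s) \<le> r"
    proof (rule N1[OF q1 d1 supp_g])
      show "0 \<le> r" using r0 by simp
      fix i assume "i < d"
      then have "s i < k" using that by (auto simp: G_def PiE_def Pi_def)
      then have "real (s i) \<le> real k" by simp
      then have "real (s i) * \<sigma> \<le> real k * \<sigma>" using s0 by (simp add: mult_right_mono)
      also have "real k * \<sigma> = r * wq q d" using k1 by (simp add: \<sigma>_def w_def)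
      finally show "\<bar>g s i\<bar> \<le> r * wq q d" using \<open>i < d\<close> s0 by (simp add: g_def)
    qed
    then show ?thesis using supp_space[OF supp_g] by (simp add: lq_ball_fin_def g_def)
  qed
  define T where "T x = {s \<in> G. lq_norm q (g s - x) \<le> eps}" for x
  define Bad where "Bad x s = {i \<in> {..<d}. \<bar>g s i - x i\<bar> \<ge> \<sigma> / 2}" for x s
  have bad_small: "2 * card (Bad x s) < d" if "x \<in> X" "s \<in> T x" for x s
  proof (rule ccontr)
    assume "\<not> 2 * card (Bad x s) < d"
    then have "real d \<le> 2 * real (card (Bad x s))" by linarith
    have "r / (2 * real k) / 2 \<le> lq_norm q (g s - x)"
    proof (rule N2[OF q1 d1 supp_in_diff[OF supp_g supp_X[OF that(1)]]])
      show "0 \<le> r / (2 * real k)" using r0 by simp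
      show "Bad x s \<subseteq> {..<d}" by (auto simp: Bad_def)
      show "real d \<le> 2 * real (card (Bad x s))" by fact
      fix i assume "i \<in> Bad x s"
      then have "\<bar>g s i - x i\<bar> \<ge> \<sigma> / 2" by (simp add: Bad_def)
      moreover have "\<sigma> / 2 = r / (2 * real k) * wq q d" by (simp add: \<sigma>_def w_def)
      ultimately show "r / (2 * real k) * wq q d \<le> \<bar>(g s - x) i\<bar>" by simp
    qed
    moreover have "lq_norm q (g s - x) \<le> eps" using that by (simp add: T_def)
    moreover have "eps < r / (2 * real k) / 2" using ke k1 by (simp add: field_simps)
    ultimately show False by linarith
  qed
  define \<B> where "\<B> = {B. B \<subseteq> {..<d} \<and> 2 * card B < d}"
  define Sg where "Sg = Sigma \<B> (\<lambda>B. PiE B (\<lambda>_. {..<k}))"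
  have finB: "finite \<B>" unfolding \<B>_def by (rule finite_subset[of _ "Pow {..<d}"]) auto
  have finSg: "finite Sg" unfolding Sg_def using finB
    by (intro finite_SigmaI) (auto simp: \<B>_def intro!: finite_PiE dest: finite_subset)
  have cardT: "card (T x) \<le> card Sg" if "x \<in> X" for x
  proof -
    define \<phi> where "\<phi> s = (Bad x s, restrict s (Bad x s))" for s
    have "inj_on \<phi> (T x)"
    proof (rule inj_onI)
      fix s s' assume sT: "s \<in> T x" and s'T: "s' \<in> T x" and eq: "\<phi> s = \<phi> s'"
      have BB: "Bad x s = Bad x s'" using eq by (simp add: \<phi>_def)
      have rr: "restrict s (Bad x s) = restrict s' (Bad x s)" using eq by (simp add: \<phi>_def BB)
      have sG: "s \<in> G" "s' \<in> G" using sT s'T by (auto simp: T_def)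
      show "s = s'" unfolding G_def
      proof (rule PiE_ext)
        show "s \<in> PiE {..<d} (\<lambda>_. {..<k})" "s' \<in> PiE {..<d} (\<lambda>_. {..<k})" using sG by (auto simp: G_def)
        fix i assume "i \<in> {..<d}"
        show "s i = s' i"
        proof (cases "i \<in> Bad x s")
          case True
          then show ?thesis using fun_cong[OF rr, of i] by simp
        next
          case False
          then have F': "i \<notin> Bad x s'" using BB by simp
          have a1: "\<bar>real (s i) * \<sigma> - x i\<bar> < \<sigma> / 2"
            using False \<open>i \<in> {..<d}\<close> by (simp add: Bad_def g_def)
          have a2: "\<bar>real (s' i) * \<sigma> - x i\<bar> < \<sigma> / 2"
            using F' \<open>i \<in> {..<d}\<close> by (simp add: Bad_def g_def)
          have e: "\<bar>real (s i) - real (s' i)\<bar> * \<sigma> = \<bar>real (s i) * \<sigma> - real (s' i) * \<sigma>\<bar>"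
            using s0 by (metis abs_mult abs_of_pos left_diff_distrib)
          have "\<bar>real (s i) - real (s' i)\<bar> * \<sigma> < \<sigma>"
            unfolding e using a1 a2 by linarith
          then have "\<bar>real (s i) - real (s' i)\<bar> < 1" using s0 by simp
          then show ?thesis by linarith
        qed
      qed
    qed
    moreover have "\<phi> ` T x \<subseteq> Sg"
    proof
      fix y assume "y \<in> \<phi> ` T x"
      then obtain s where sT: "s \<in> T x" and y: "y = \<phi> s" by auto
      have "Bad x s \<in> \<B>" using bad_small[OF that sT] by (auto simp: \<B>_def Bad_def)
      moreover have "restrict s (Bad x s) \<in> PiE (Bad x s) (\<lambda>_. {..<k})"
        using sT by (auto simp: T_def G_def Bad_def PiE_def Pi_def)
      ultimately show "y \<in> Sg" by (simp add: y \<phi>_def Sg_def)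
    qed
    ultimately show ?thesis using finSg by (metis card_inj_on_le)
  qed
  have cardSg: "real (card Sg) \<le> 2^d * real k powr (real d / 2)"
  proof -
    have "real (card Sg) = (\<Sum>B\<in>\<B>. real k ^ card B)"
    proof -
      have fB: "\<And>B. B \<in> \<B> \<Longrightarrow> finite B" by (auto simp: \<B>_def dest: finite_subset)
      have "card Sg = (\<Sum>B\<in>\<B>. card (PiE B (\<lambda>_. {..<k})))"
        unfolding Sg_def using finB fB by (subst card_SigmaI) (auto intro: finite_PiE)
      also have "\<dots> = (\<Sum>B\<in>\<B>. k ^ card B)"
        using fB by (intro sum.cong) (auto simp: card_PiE)
      finally show ?thesis by simp
    qed
    also have "\<dots> \<le> (\<Sum>B\<in>\<B>. real k powr (real d / 2))"
    proof (rule sum_mono)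
      fix B assume "B \<in> \<B>"
      then have "real (card B) \<le> real d / 2" by (simp add: \<B>_def)
      then have "real k powr real (card B) \<le> real k powr (real d / 2)"
        using k1 by (intro powr_mono) auto
      then show "real k ^ card B \<le> real k powr (real d / 2)"
        using k1 by (simp add: powr_realpow)
    qed
    also have "\<dots> = real (card \<B>) * real k powr (real d / 2)" by simp
    also have "\<dots> \<le> real (card (Pow {..<d})) * real k powr (real d / 2)"
    proof (rule mult_right_mono)
      have "\<B> \<subseteq> Pow {..<d}" by (auto simp: \<B>_def)
      then have "card \<B> \<le> card (Pow {..<d})" by (intro card_mono) simp_all
      then show "real (card \<B>) \<le> real (card (Pow {..<d}))" by simp
    qed simp
    also have "\<dots> = 2^d * real k powr (real d / 2)" by (simp add: card_Pow)
    finally show ?thesis .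
  qed
  have "G \<subseteq> (\<Union>x\<in>X. T x)"
  proof
    fix s assume "s \<in> G"
    then obtain x where "x \<in> X" "lq_norm q (g s - x) \<le> eps" using covers[OF g_ball] by blast
    then show "s \<in> (\<Union>x\<in>X. T x)" using \<open>s \<in> G\<close> by (auto simp: T_def)
  qed
  then have "card G \<le> card (\<Union>x\<in>X. T x)"
    by (intro card_mono) (auto simp: T_def finX intro: finite_subset[OF _ finG])
  also have "\<dots> \<le> (\<Sum>x\<in>X. card (T x))" using finX by (rule card_UN_le)
  finally have cg: "card G \<le> (\<Sum>x\<in>X. card (T x))" .
  then have "real (card G) \<le> real (\<Sum>x\<in>X. card (T x))" by (simp only: of_nat_le_iff)
  then have "real (card G) \<le> (\<Sum>x\<in>X. real (card (T x)))" by (simp only: of_nat_sum)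
  also have "\<dots> \<le> (\<Sum>x\<in>X. 2^d * real k powr (real d / 2))"
  proof (rule sum_mono)
    fix x assume "x \<in> X"
    then have "real (card (T x)) \<le> real (card Sg)" using cardT by simp
    then show "real (card (T x)) \<le> 2^d * real k powr (real d / 2)" using cardSg by linarith
  qed
  also have "\<dots> = real (card X) * 2^d * real k powr (real d / 2)" by simp
  finally show ?thesis using cardG by simp
qed


lemma LB:
  assumes q1: "1 \<le> q" and d1: "d \<ge> 1" and r1: "r \<ge> 1" and e0: "0 < eps" and e1: "eps \<le> 1/128"
    and cov: "lq_covering q (lq_ball_fin q d r) X eps"
  shows "real d * (log 2 r + 1) \<le> 2 * log 2 (real (card X))"
proof -
  define k where "k = nat \<lfloor>r / (8 * eps)\<rfloor>"
  have big: "r / (8 * eps) \<ge> 16 * r" using e0 e1 r1 by (simp add: field_simps)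
  have kle: "real k \<le> r / (8 * eps)" using big r1 by (simp add: k_def)
  have kge: "real k \<ge> 8 * r" using big r1 unfolding k_def by linarith
  have k1: "k \<ge> 1" using kge r1 by linarith
  have ke: "4 * real k * eps < r"
  proof -
    have "4 * real k * eps \<le> 4 * (r / (8 * eps)) * eps" using kle e0 by (intro mult_right_mono mult_left_mono) auto
    also have "\<dots> = r / 2" using e0 by simp
    finally show ?thesis using r1 by simp
  qed
  have main: "real k ^ d \<le> real (card X) * 2^d * real k powr (real d / 2)"
    by (rule LB_count[OF q1 d1 k1 _ e0 ke cov]) (use r1 in simp)
  have kpos: "real k > 0" using k1 by simp
  have lhs_pos: "real k ^ d > 0" using kpos by simp
  have cX: "real (card X) > 0"
  proof (rule ccontr)
    assume "\<not> real (card X) > 0"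
    then have "real (card X) = 0" by simp
    then show False using main lhs_pos by simp
  qed
  have "log 2 (real k ^ d) \<le> log 2 (real (card X) * 2^d * real k powr (real d / 2))"
    using main lhs_pos cX kpos by (subst log_le_cancel_iff) auto
  also have "\<dots> = log 2 (real (card X)) + real d + real d / 2 * log 2 (real k)"
    using cX kpos by (simp add: log_mult log_powr log_nat_power)
  finally have A: "real d * log 2 (real k) \<le> log 2 (real (card X)) + real d + real d / 2 * log 2 (real k)"
    using kpos by (simp add: log_nat_power)
  have "log 2 (8 * r) \<le> log 2 (real k)" using kge r1 by (subst log_le_cancel_iff) auto
  moreover have "log 2 (8::real) = 3"
  proof -
    have "log 2 ((2::real) ^ 3) = 3" by (subst log_nat_power) auto
    then show ?thesis by simp
  qed
  moreover have "log 2 (8 * r) = log 2 8 + log 2 r" using r1 by (simp add: log_mult)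
  ultimately have B: "3 + log 2 r \<le> log 2 (real k)" by simp
  have "real d / 2 * (3 + log 2 r) \<le> real d / 2 * log 2 (real k)"
    using B by (intro mult_left_mono) auto
  with A show ?thesis by (simp add: algebra_simps)
qed



lemma norm_zero_le: "1 \<le> q \<Longrightarrow> lq_norm q (\<lambda>_. 0) \<le> 0"
  by (rule N1[of q 1]) (auto simp: supp_in_def)

lemma UB:
  assumes q1: "1 \<le> q" and r1: "r \<ge> 1" and e0: "0 < eps" and e1: "eps \<le> 1"
  shows "\<exists>X. lq_covering q (lq_ball_fin q d r) X eps \<and>
     log 2 (real (card X)) \<le> real d * (3 + log 2 r + log 2 (real d) + log 2 (1/eps))"
proof (cases "d = 0")
  case True
  have z: "(\<lambda>_. 0::real) \<in> lq_ball_fin q d r"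
    using norm_zero_le[OF q1] r1 supp_space[of 0 "\<lambda>_. 0"] by (auto simp: lq_ball_fin_def supp_in_def)
  have a0: "a = (\<lambda>_. 0)" if "a \<in> lq_ball_fin q d r" for a
  proof
    fix n show "a n = 0" using that True by (simp add: lq_ball_fin_def)
  qed
  have n0: "lq_norm q ((\<lambda>_. 0::real) - (\<lambda>_. 0)) \<le> eps"
    using norm_zero_le[OF q1] e0 by (simp add: fun_diff_def)
  have "lq_covering q (lq_ball_fin q d r) {\<lambda>_. 0} eps"
    unfolding lq_covering_def
  proof (intro conjI ballI)
    show "finite {\<lambda>_. 0::real}" by simp
    show "{\<lambda>_. 0::real} \<subseteq> lq_ball_fin q d r" using z by simp
    fix a assume "a \<in> lq_ball_fin q d r"
    then have "a = (\<lambda>_. 0)" by (rule a0)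
    then show "\<exists>x\<in>{\<lambda>_. 0}. lq_norm q (a - x) \<le> eps" using n0 by simp
  qed
  then show ?thesis using True by (intro exI[of _ "{\<lambda>_. 0}"]) simp
next
  case False
  then have d1: "d \<ge> 1" by simp
  define \<sigma> where "\<sigma> = eps / real d"
  have s0: "\<sigma> > 0" using e0 d1 by (simp add: \<sigma>_def)
  define K where "K = nat \<lceil>r / \<sigma>\<rceil>"
  define gz where "gz s = (\<lambda>i. if i < d then real_of_int (s i) * \<sigma> else 0)" for s :: "nat \<Rightarrow> int"
  define P where "P = PiE {..<d} (\<lambda>_. {- int K..int K})"
  define X where "X = lq_ball_fin q d r \<inter> gz ` P"
  have finP: "finite P" by (simp add: P_def finite_PiE)
  have cardP: "card P = (2 * K + 1) ^ d" proof -
    have "nat (2 * int K + 1) = Suc (2 * K)" by arith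
    then show ?thesis by (simp add: P_def card_PiE)
  qed
  have finX: "finite X" using finP by (simp add: X_def)
  have cardX: "card X \<le> (2 * K + 1) ^ d"
  proof -
    have "card X \<le> card (gz ` P)" using finP by (intro card_mono) (auto simp: X_def)
    also have "\<dots> \<le> card P" using finP by (rule card_image_le)
    finally show ?thesis using cardP by simp
  qed
  have cov: "lq_covering q (lq_ball_fin q d r) X eps"
    unfolding lq_covering_def
  proof (intro conjI ballI)
    show "finite X" by fact
    show "X \<subseteq> lq_ball_fin q d r" by (auto simp: X_def)
    fix a assume aB: "a \<in> lq_ball_fin q d r"
    have sa: "supp_in d a" using aB by (simp add: lq_ball_fin_def supp_in_def)
    have na: "lq_norm q a \<le> r" using aB by (simp add: lq_ball_fin_def)
    define f where "f i = (if a i \<ge> 0 then \<lfloor>a i / \<sigma>\<rfloor> else - \<lfloor>- a i / \<sigma>\<rfloor>)" for i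
    define s where "s = restrict f {..<d}"
    define y where "y = gz s"
    have sy: "supp_in d y" by (simp add: y_def gz_def supp_in_def)
    have yi: "\<bar>y i\<bar> \<le> \<bar>a i\<bar> \<and> \<bar>a i - y i\<bar> \<le> \<sigma>" for i
    proof (cases "i < d")
      case True
      then have yv: "y i = real_of_int (f i) * \<sigma>" by (simp add: y_def gz_def s_def)
      show ?thesis
      proof (cases "a i \<ge> 0")
        case True
        have f: "f i = \<lfloor>a i / \<sigma>\<rfloor>" using True by (simp add: f_def)
        have l1: "real_of_int \<lfloor>a i / \<sigma>\<rfloor> \<le> a i / \<sigma>" by (rule of_int_floor_le)
        have l2: "a i / \<sigma> < real_of_int \<lfloor>a i / \<sigma>\<rfloor> + 1" by (rule real_of_int_floor_add_one_gt)
        have l3: "0 \<le> real_of_int \<lfloor>a i / \<sigma>\<rfloor>" using True s0 by simp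
        have m1: "real_of_int \<lfloor>a i / \<sigma>\<rfloor> * \<sigma> \<le> a i" using mult_right_mono[OF l1, of \<sigma>] s0 by simp
        have m2: "a i < (real_of_int \<lfloor>a i / \<sigma>\<rfloor> + 1) * \<sigma>" using mult_strict_right_mono[OF l2 s0] s0 by simp
        have m3: "0 \<le> real_of_int \<lfloor>a i / \<sigma>\<rfloor> * \<sigma>" using l3 s0 by simp
        show ?thesis using m1 m2 m3 True unfolding yv f by (simp add: algebra_simps)
      next
        case False
        have f: "f i = - \<lfloor>- a i / \<sigma>\<rfloor>" using False by (simp add: f_def)
        have l1: "real_of_int \<lfloor>- a i / \<sigma>\<rfloor> \<le> - a i / \<sigma>" by (rule of_int_floor_le)
        have l2: "- a i / \<sigma> < real_of_int \<lfloor>- a i / \<sigma>\<rfloor> + 1" by (rule real_of_int_floor_add_one_gt)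
        have l3: "0 \<le> real_of_int \<lfloor>- a i / \<sigma>\<rfloor>" using False s0 by (simp add: divide_nonpos_pos)
        have m1: "real_of_int \<lfloor>- a i / \<sigma>\<rfloor> * \<sigma> \<le> - a i" using mult_right_mono[OF l1, of \<sigma>] s0 by simp
        have m2: "- a i < (real_of_int \<lfloor>- a i / \<sigma>\<rfloor> + 1) * \<sigma>" using mult_strict_right_mono[OF l2 s0] s0 by simp
        have m3: "0 \<le> real_of_int \<lfloor>- a i / \<sigma>\<rfloor> * \<sigma>" using l3 s0 by simp
        show ?thesis using m1 m2 m3 False unfolding yv f by (simp add: algebra_simps)
      qed
    next
      case False
      then show ?thesis using sa s0 by (simp add: y_def gz_def supp_in_def)
    qed
    have ny: "lq_norm q y \<le> r" using norm_mono[OF q1 sa sy] yi na by (meson order_trans)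
    have yB: "y \<in> lq_ball_fin q d r" using ny supp_space[OF sy] sy by (simp add: lq_ball_fin_def supp_in_def)
    have sP: "s \<in> P"
    proof -
      have "f i \<in> {- int K..int K}" if "i < d" for i
      proof -
        have ai: "\<bar>a i\<bar> \<le> r" using coord_le_norm[OF q1 sa, of i] na by simp
        have rK: "r / \<sigma> \<le> real K" unfolding K_def by linarith
        have "\<bar>a i\<bar> / \<sigma> \<le> real K" using ai s0 rK by (meson divide_right_mono less_imp_le order_trans)
        then have "\<bar>real_of_int (f i)\<bar> \<le> real K"
        proof (cases "0 \<le> a i")
          case True
          have "real_of_int \<lfloor>a i / \<sigma>\<rfloor> \<le> a i / \<sigma>" by (rule of_int_floor_le)
          moreover have "0 \<le> real_of_int \<lfloor>a i / \<sigma>\<rfloor>" using True s0 by simp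
          moreover have "f i = \<lfloor>a i / \<sigma>\<rfloor>" using True by (simp add: f_def)
          ultimately show ?thesis using True \<open>\<bar>a i\<bar> / \<sigma> \<le> real K\<close> by (smt (verit))
        next
          case False
          have "real_of_int \<lfloor>- a i / \<sigma>\<rfloor> \<le> - a i / \<sigma>" by (rule of_int_floor_le)
          moreover have "0 \<le> real_of_int \<lfloor>- a i / \<sigma>\<rfloor>" using False s0 by (simp add: divide_nonpos_pos)
          moreover have "f i = - \<lfloor>- a i / \<sigma>\<rfloor>" using False by (simp add: f_def)
          moreover have "- a i / \<sigma> = \<bar>a i\<bar> / \<sigma>" using False by simp
          ultimately show ?thesis using \<open>\<bar>a i\<bar> / \<sigma> \<le> real K\<close> by (smt (verit) of_int_minus)
        qed
        then show ?thesis by auto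
      qed
      then show ?thesis by (simp add: P_def s_def restrict_PiE_iff)
    qed
    have yX: "y \<in> X" using yB sP by (auto simp: X_def y_def)
    have "lq_norm q (a - y) \<le> eps"
    proof (rule N1[OF q1 d1 supp_in_diff[OF sa sy]])
      show "0 \<le> eps" using e0 by simp
      fix i assume "i < d"
      have "\<sigma> \<le> eps * wq q d"
        using wq_ge[OF q1 d1] e0 by (simp add: \<sigma>_def divide_inverse mult_left_mono)
      then show "\<bar>(a - y) i\<bar> \<le> eps * wq q d" using yi[of i] by simp
    qed
    then show "\<exists>x\<in>X. lq_norm q (a - x) \<le> eps" using yX by blast
  qed
  have rd: "real d * r / eps \<ge> 1"
  proof -
    have "1 * 1 \<le> real d * r" using d1 r1 by (intro mult_mono) auto
    then have h: "1 \<le> real d * r" by simp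
    have "real d * r * eps \<le> real d * r" using h e1 e0 by (simp add: mult_left_le)
    then have "real d * r \<le> real d * r / eps" using e0 by (simp add: le_divide_eq)
    then show ?thesis using h by linarith
  qed
  have Kb: "real (2 * K + 1) \<le> 5 * (real d * r / eps)"
  proof -
    have x0: "0 \<le> r / \<sigma>" using r1 s0 by simp
    have "real K = real_of_int \<lceil>r / \<sigma>\<rceil>" unfolding K_def using x0 by simp
    then have "real K \<le> r / \<sigma> + 1" using ceiling_correct[of "r / \<sigma>"] by linarith
    also have "r / \<sigma> = real d * r / eps" by (simp add: \<sigma>_def)
    finally have "real K \<le> real d * r / eps + 1" .
    then show ?thesis using rd by (simp only: of_nat_add of_nat_mult of_nat_1 of_nat_numeral) (smt (verit))
  qed
  have rhs_nonneg: "0 \<le> 3 + log 2 r + log 2 (real d) + log 2 (1/eps)"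
    using r1 d1 e0 e1 by auto
  have "log 2 (real (card X)) \<le> real d * (3 + log 2 r + log 2 (real d) + log 2 (1/eps))"
  proof (cases "card X = 0")
    case True
    have "log 2 (0::real) = 0" by (simp add: log_def)
    then show ?thesis using rhs_nonneg True by simp
  next
    case False
    have "log 2 (real (card X)) \<le> log 2 (real ((2 * K + 1) ^ d))"
    proof (subst log_le_cancel_iff)
      have "real (card X) \<le> real ((2 * K + 1) ^ d)" using cardX by (simp only: of_nat_le_iff)
      then show "real (card X) \<le> real ((2 * K + 1) ^ d)" .
    qed (use False in auto)
    also have "\<dots> = real d * log 2 (real (2 * K + 1))" by (simp add: log_nat_power)
    also have "\<dots> \<le> real d * log 2 (5 * (real d * r / eps))"
      using Kb by (intro mult_left_mono) (auto simp: log_le_cancel_iff)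
    also have "log 2 (5 * (real d * r / eps)) = log 2 5 + log 2 (real d) + log 2 r + log 2 (1/eps)"
      using d1 r1 e0 by (simp add: log_mult log_divide)
    also have "log 2 (5::real) \<le> 3"
    proof -
      have "log 2 (5::real) \<le> log 2 ((2::real)^3)" by (subst log_le_cancel_iff) auto
      also have "\<dots> = 3" by (subst log_nat_power) auto
      finally show ?thesis .
    qed
    finally show ?thesis by (simp add: algebra_simps) (meson mult_right_mono of_nat_0_le_iff)
  qed
  then show ?thesis using cov by blast
qed



lemma log2_le_powr:
  fixes m h :: real assumes "m \<ge> 1" "h > 0"
  shows "log 2 m \<le> (2 / (h * ln 2)) * m powr (h/2)"
proof -
  have mp: "m > 0" using assms by simp
  have "ln (m powr (h/2)) \<le> m powr (h/2) - 1" by (rule ln_le_minus_one) (use mp in simp)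
  then have "(h/2) * ln m \<le> m powr (h/2)" using mp by (simp add: ln_powr)
  then have "ln m \<le> (2/h) * m powr (h/2)" using assms by (simp add: field_simps)
  then have a: "ln m / ln 2 \<le> ((2/h) * m powr (h/2)) / ln 2" by (rule divide_right_mono) simp
  have b: "((2/h) * m powr (h/2)) / ln 2 = (2/(h*ln 2)) * m powr (h/2)" by simp
  show ?thesis unfolding log_def using a b by linarith
qed

lemma UB_asym:
  fixes c h \<gamma> m r :: real
  assumes c0: "c > 0" and h0: "h > 0" and g0: "\<gamma> > 0" and m1: "m \<ge> 1" and r1: "r \<ge> 1"
    and f: "real d * (log 2 r + 1) \<le> c * m powr (1 + h/2)"
  shows "real d * (3 + log 2 r + log 2 (real d) + \<gamma> * log 2 m)
     \<le> (c * (3 + \<bar>log 2 c\<bar>) + c * (1 + h/2 + \<gamma>) * (2 / (h * ln 2))) * m powr (1 + h)"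
proof -
  define t where "t = m powr (1 + h/2)"
  define L where "L = log 2 m"
  have mp: "m > 0" using m1 by simp
  have tp: "t > 0" using mp by (simp add: t_def)
  have L0: "L \<ge> 0" using m1 by (simp add: L_def)
  have lr: "log 2 r \<ge> 0" using r1 by simp
  have F1: "real d \<le> c * t"
  proof -
    have "real d \<le> real d * (log 2 r + 1)" using lr by (simp add: mult_le_cancel_left1)
    then show ?thesis using f by (simp add: t_def)
  qed
  have F2: "real d * (3 + log 2 r) \<le> 3 * (c * t)"
  proof -
    have "real d * (3 + log 2 r) \<le> 3 * (real d * (log 2 r + 1))"
      using lr by (simp add: algebra_simps mult_left_mono)
    then show ?thesis using f by (simp add: t_def)
  qed
  define Q where "Q = \<bar>log 2 c\<bar> + (1 + h/2) * L"
  have Q0: "Q \<ge> 0" using L0 h0 by (simp add: Q_def)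
  have F3: "real d * log 2 (real d) \<le> (c * t) * Q"
  proof (cases "d = 0")
    case True then show ?thesis using Q0 c0 tp by simp
  next
    case False
    have "log 2 (real d) \<le> log 2 (c * t)" using F1 False by (subst log_le_cancel_iff) (use c0 tp in auto)
    also have "\<dots> = log 2 c + (1 + h/2) * L"
      using c0 mp by (simp add: log_mult t_def L_def log_powr)
    also have "\<dots> \<le> Q" by (simp add: Q_def)
    finally have "log 2 (real d) \<le> Q" .
    then have "real d * log 2 (real d) \<le> real d * Q" by (simp add: mult_left_mono)
    also have "\<dots> \<le> (c * t) * Q" using F1 Q0 by (simp add: mult_right_mono)
    finally show ?thesis .
  qed
  have F4: "real d * (\<gamma> * L) \<le> (c * t) * (\<gamma> * L)"
    using F1 g0 L0 by (simp add: mult_right_mono)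
  have sum: "real d * (3 + log 2 r + log 2 (real d) + \<gamma> * L)
      \<le> (c * t) * (3 + \<bar>log 2 c\<bar>) + (c * (1 + h/2 + \<gamma>)) * (t * L)"
    using F2 F3 F4 by (simp add: Q_def algebra_simps)
  have F5: "L \<le> (2 / (h * ln 2)) * m powr (h/2)" unfolding L_def by (rule log2_le_powr[OF m1 h0])
  have F6: "t * m powr (h/2) = m powr (1 + h)"
    unfolding t_def powr_add[symmetric] by (rule arg_cong[where f="\<lambda>e. m powr e"]) simp
  have F7: "t \<le> m powr (1 + h)" unfolding t_def using m1 h0 by (intro powr_mono) auto
  have "t * L \<le> t * ((2 / (h * ln 2)) * m powr (h/2))" using mult_left_mono[OF F5, of t] tp by simp
  also have "\<dots> = (2 / (h * ln 2)) * m powr (1 + h)" using F6 by (simp add: algebra_simps)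
  finally have G1: "t * L \<le> (2 / (h * ln 2)) * m powr (1 + h)" .
  have G2: "(c * t) * (3 + \<bar>log 2 c\<bar>) \<le> (c * m powr (1 + h)) * (3 + \<bar>log 2 c\<bar>)"
    using F7 c0 by (intro mult_right_mono) auto
  have G3: "(c * (1 + h/2 + \<gamma>)) * (t * L) \<le> (c * (1 + h/2 + \<gamma>)) * ((2 / (h * ln 2)) * m powr (1 + h))"
    using G1 c0 h0 g0 by (intro mult_left_mono) auto
  define K where "K = 2 / (h * ln 2)"
  define P where "P = m powr (1 + h)"
  have e1: "(c * (3 + \<bar>log 2 c\<bar>) + c * (1 + h/2 + \<gamma>) * K) * P
      = (c * P) * (3 + \<bar>log 2 c\<bar>) + (c * (1 + h/2 + \<gamma>)) * (K * P)"
    by (simp add: algebra_simps)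
  have final: "real d * (3 + log 2 r + log 2 (real d) + \<gamma> * L)
      \<le> (c * (3 + \<bar>log 2 c\<bar>) + c * (1 + h/2 + \<gamma>) * K) * P"
    using sum G2 G3 e1 unfolding K_def[symmetric] P_def[symmetric] by linarith
  show ?thesis using final by (simp only: L_def K_def P_def)
qed

lemma all_from_eventually:
  fixes g w :: "nat \<Rightarrow> real"
  assumes ev: "\<And>M. M \<ge> N \<Longrightarrow> M \<ge> 1 \<Longrightarrow> g M \<le> C * w M" and wp: "\<And>M. M \<ge> 1 \<Longrightarrow> w M > 0"
  shows "\<exists>c2>0. \<forall>M\<ge>1. g M \<le> c2 * w M"
proof -
  define c2 where "c2 = \<bar>C\<bar> + (\<Sum>M\<in>{1..N}. \<bar>g M / w M\<bar>) + 1"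
  have S0: "(\<Sum>M\<in>{1..N}. \<bar>g M / w M\<bar>) \<ge> 0" by (intro sum_nonneg) auto
  have "c2 > 0" using S0 by (simp add: c2_def)
  moreover have "g M \<le> c2 * w M" if "M \<ge> 1" for M
  proof (cases "M \<ge> N")
    case True
    have "g M \<le> C * w M" using ev True that by simp
    also have "\<dots> \<le> c2 * w M" using wp[OF that] S0 by (intro mult_right_mono) (auto simp: c2_def)
    finally show ?thesis .
  next
    case False
    then have "M \<in> {1..N}" using that by simp
    then have "\<bar>g M / w M\<bar> \<le> (\<Sum>M\<in>{1..N}. \<bar>g M / w M\<bar>)"
      by (intro member_le_sum) auto
    moreover have "g M / w M \<le> \<bar>g M / w M\<bar>" by (rule abs_ge_self)
    ultimately have "g M / w M \<le> c2" unfolding c2_def using abs_ge_zero[of C] by linarith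
    then show ?thesis using wp[OF that] by (simp add: pos_divide_le_eq)
  qed
  ultimately show ?thesis by blast
qed



lemma lower_dir:
  assumes q1: "1 \<le> q" and r1: "\<And>M. r M \<ge> 1" and g0: "\<gamma> > 0"
    and ge: "gamma_encodable q (\<lambda>M. lq_ball_fin q (d M) (r M)) \<gamma>" and h0: "h > 0"
  shows "(\<lambda>M. real (d M) * (log 2 (r M) + 1)) \<in> O(\<lambda>M. real M powr (1 + h))"
proof -
  obtain c1 c2 where c1: "c1 > 0" and c2: "c2 > 0" and
    H: "\<And>M. M \<ge> 1 \<Longrightarrow> \<exists>X. lq_covering q (lq_ball_fin q (d M) (r M)) X (c1 * real M powr (-\<gamma>))
        \<and> log 2 (real (card X)) \<le> c2 * real M powr (1 + h)"
    using ge h0 unfolding gamma_encodable_def has_encoding_def by blast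
  have "((\<lambda>M. real M powr (-\<gamma>)) \<longlongrightarrow> 0) sequentially"
    by (rule tendsto_neg_powr) (use g0 filterlim_real_sequentially in auto)
  then have "((\<lambda>M. c1 * real M powr (-\<gamma>)) \<longlongrightarrow> c1 * 0) sequentially"
    by (intro tendsto_mult tendsto_const)
  then have ev1: "eventually (\<lambda>M. c1 * real M powr (-\<gamma>) < 1/128) sequentially"
    by (intro order_tendstoD(2)) auto
  have ev2: "eventually (\<lambda>M. M \<ge> (1::nat)) sequentially" by (rule eventually_ge_at_top)
  show ?thesis
  proof (rule bigoI[of _ "2 * c2"])
    show "eventually (\<lambda>M. norm (real (d M) * (log 2 (r M) + 1)) \<le> 2 * c2 * norm (real M powr (1 + h))) sequentially"
      using ev1 ev2
    proof eventually_elim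
      case (elim M)
      then obtain X where cov: "lq_covering q (lq_ball_fin q (d M) (r M)) X (c1 * real M powr (-\<gamma>))"
        and lg: "log 2 (real (card X)) \<le> c2 * real M powr (1 + h)" using H by blast
      have lr: "log 2 (r M) \<ge> 0" using r1[of M] by simp
      have fn: "norm (real (d M) * (log 2 (r M) + 1)) = real (d M) * (log 2 (r M) + 1)"
        using lr by simp
      have pn: "norm (real M powr (1 + h)) = real M powr (1 + h)" by simp
      have "real (d M) * (log 2 (r M) + 1) \<le> 2 * c2 * real M powr (1 + h)"
      proof (cases "d M = 0")
        case True then show ?thesis using c2 by simp
      next
        case False
        have "real (d M) * (log 2 (r M) + 1) \<le> 2 * log 2 (real (card X))"
          by (rule LB[OF q1 _ r1 _ _ cov]) (use False elim c1 in auto)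
        then show ?thesis using lg by simp
      qed
      then show ?case using fn pn by simp
    qed
  qed
qed

lemma upper_dir:
  assumes q1: "1 \<le> q" and r1: "\<And>M. r M \<ge> 1"
    and P: "\<forall>h>0. (\<lambda>M. real (d M) * (log 2 (r M) + 1)) \<in> O(\<lambda>M. real M powr (1 + h))"
  shows "inf_encodable q (\<lambda>M. lq_ball_fin q (d M) (r M))"
  unfolding inf_encodable_def gamma_encodable_def has_encoding_def
proof (intro allI impI)
  fix \<gamma> h :: real assume g0: "\<gamma> > 0" and h0: "h > 0"
  have "(\<lambda>M. real (d M) * (log 2 (r M) + 1)) \<in> O(\<lambda>M. real M powr (1 + h/2))" using P h0 by simp
  then obtain c where c0: "c > 0" and ev:
    "eventually (\<lambda>M. norm (real (d M) * (log 2 (r M) + 1)) \<le> c * norm (real M powr (1 + h/2))) sequentially"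
    by (elim landau_o.bigE)
  then obtain N where N: "\<And>M. M \<ge> N \<Longrightarrow> norm (real (d M) * (log 2 (r M) + 1)) \<le> c * norm (real M powr (1 + h/2))"
    unfolding eventually_sequentially by blast
  define B where "B M = real (d M) * (3 + log 2 (r M) + log 2 (real (d M)) + \<gamma> * log 2 (real M))" for M
  define C where "C = c * (3 + \<bar>log 2 c\<bar>) + c * (1 + h/2 + \<gamma>) * (2 / (h * ln 2))"
  have "\<exists>c2>0. \<forall>M\<ge>1. B M \<le> c2 * real M powr (1 + h)"
  proof (rule all_from_eventually[of N])
    fix M :: nat assume "M \<ge> N" "M \<ge> 1"
    have "real (d M) * (log 2 (r M) + 1) \<le> norm (real (d M) * (log 2 (r M) + 1))" by simp
    also have "\<dots> \<le> c * norm (real M powr (1 + h/2))" using N[OF \<open>M \<ge> N\<close>] .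
    also have "\<dots> = c * real M powr (1 + h/2)" by simp
    finally have f: "real (d M) * (log 2 (r M) + 1) \<le> c * real M powr (1 + h/2)" .
    show "B M \<le> C * real M powr (1 + h)"
      unfolding B_def C_def by (rule UB_asym[OF c0 h0 g0 _ r1 f]) (use \<open>M \<ge> 1\<close> in simp)
  next
    fix M :: nat assume "M \<ge> 1" then show "real M powr (1 + h) > 0" by simp
  qed
  then obtain c2 where c2: "c2 > 0" and Bb: "\<And>M. M \<ge> 1 \<Longrightarrow> B M \<le> c2 * real M powr (1 + h)" by blast
  have "\<forall>M\<ge>1. \<exists>X. lq_covering q (lq_ball_fin q (d M) (r M)) X (1 * real M powr (-\<gamma>)) \<and>
          log 2 (real (card X)) \<le> c2 * real M powr (1 + h)"
  proof (intro allI impI)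
    fix M :: nat assume M1: "M \<ge> 1"
    define eps where "eps = real M powr (-\<gamma>)"
    have e0: "eps > 0" using M1 by (simp add: eps_def)
    have e1: "eps \<le> 1"
    proof -
      have "real M powr (-\<gamma>) \<le> real M powr 0" using M1 g0 by (intro powr_mono) auto
      then show ?thesis using M1 by (simp add: eps_def)
    qed
    have le: "log 2 (1 / eps) = \<gamma> * log 2 (real M)"
      by (simp add: eps_def powr_minus_divide[symmetric] log_powr)
    obtain X where cov: "lq_covering q (lq_ball_fin q (d M) (r M)) X eps"
      and lg: "log 2 (real (card X)) \<le> real (d M) * (3 + log 2 (r M) + log 2 (real (d M)) + log 2 (1/eps))"
      using UB[OF q1 r1 e0 e1] by blast
    have "log 2 (real (card X)) \<le> B M" using lg le by (simp add: B_def)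
    also have "\<dots> \<le> c2 * real M powr (1 + h)" using Bb[OF M1] .
    finally show "\<exists>X. lq_covering q (lq_ball_fin q (d M) (r M)) X (1 * real M powr (-\<gamma>)) \<and>
          log 2 (real (card X)) \<le> c2 * real M powr (1 + h)" using cov by (auto simp: eps_def)
  qed
  then show "\<exists>c1>0. \<exists>c2>0. \<forall>M\<ge>1. \<exists>X. lq_covering q (lq_ball_fin q (d M) (r M)) X (c1 * real M powr (-\<gamma>)) \<and>
          log 2 (real (card X)) \<le> c2 * real M powr (1 + h)" using c2 by (intro exI[of _ 1]) auto
qed

theorem mainTheorem12:
  fixes q :: ereal and d :: "nat \<Rightarrow> nat" and r :: "nat \<Rightarrow> real"
  assumes "1 \<le> q" and "\<And>M. r M \<ge> 1"
  shows "(inf_encodable q (\<lambda>M. lq_ball_fin q (d M) (r M))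
          \<or> (\<forall>\<gamma>>0. \<not> gamma_encodable q (\<lambda>M. lq_ball_fin q (d M) (r M)) \<gamma>))
       \<and> (inf_encodable q (\<lambda>M. lq_ball_fin q (d M) (r M)) \<longleftrightarrow>
          (\<forall>h>0. (\<lambda>M. real (d M) * (log 2 (r M) + 1)) \<in> O(\<lambda>M. real M powr (1 + h))))"
proof -
  have low: "\<And>\<gamma>. \<gamma> > 0 \<Longrightarrow> gamma_encodable q (\<lambda>M. lq_ball_fin q (d M) (r M)) \<gamma> \<Longrightarrow>
      (\<forall>h>0. (\<lambda>M. real (d M) * (log 2 (r M) + 1)) \<in> O(\<lambda>M. real M powr (1 + h)))"
  proof (intro allI impI)
    fix \<gamma> h :: real
    assume "\<gamma> > 0" "gamma_encodable q (\<lambda>M. lq_ball_fin q (d M) (r M)) \<gamma>" "h > 0"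
    then show "(\<lambda>M. real (d M) * (log 2 (r M) + 1)) \<in> O(\<lambda>M. real M powr (1 + h))"
      using lower_dir[OF assms(1), of r] assms(2) by blast
  qed
  have up: "(\<forall>h>0. (\<lambda>M. real (d M) * (log 2 (r M) + 1)) \<in> O(\<lambda>M. real M powr (1 + h))) \<Longrightarrow>
      inf_encodable q (\<lambda>M. lq_ball_fin q (d M) (r M))"
    using upper_dir[OF assms(1), of r] assms(2) by blast
  have ie: "inf_encodable q (\<lambda>M. lq_ball_fin q (d M) (r M)) \<Longrightarrow> gamma_encodable q (\<lambda>M. lq_ball_fin q (d M) (r M)) 1"
    by (simp add: inf_encodable_def)
  show ?thesis using low up ie by (meson zero_less_one)
qed


end
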